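(* If $\mathcal F=(A,X,f)$ and $\mathcal G=(B,X,g)$ are complete D2-directable fuzzy automata, then their direct product $\mathcal F\times\mathcal G$ is D2-directable.
   Context: A fuzzy automaton is a triple $\mathcal F=(A,X,f)$ with $A$ a finite nonempty set of states, $X$ a finite nonempty alphabet, and $f:A\times X\times A\to[0,1]$, extended to words by $f^*(a,\varepsilon,a)=1$, $f^*(a,\varepsilon,b)=0$ ($b\neq a$), $f^*(a,vx,b)=\max_{c\in A}\min\{f^*(a,v,c),f(c,x,b)\}$. Let $\mathcal F(a,w)=\{b\in A\mid f^*(a,w,b)>0\}$. $\mathcal F$ is complete if $\mathcal F(a,x)\neq\emptyset$ for all $a\in A$, $x\in X$. $\mathcal F$ is D2-directable if there is $w\in X^*$ with $\mathcal F(a,w)=\mathcal F(b,w)$ for all $a,b\in A$. The direct product is $\mathcal F\times\mathcal G=(A\times B,X,h)$ with $h((a,b),x,(a',b'))=\min\{f(a,x,a'),g(b,x,b')\}$. *)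

theory Defs
  imports Main "HOL-Library.Product_Plus" Complex_Main
begin

definition fuzzy_automaton :: "'a set \<Rightarrow> 'x set \<Rightarrow> ('a \<Rightarrow> 'x \<Rightarrow> 'a \<Rightarrow> real) \<Rightarrow> bool" where
  "fuzzy_automaton A X f \<longleftrightarrow> finite A \<and> A \<noteq> {} \<and> finite X \<and> X \<noteq> {} \<and>
     (\<forall>a\<in>A. \<forall>x\<in>X. \<forall>b\<in>A. 0 \<le> f a x b \<and> f a x b \<le> 1)"

fun fstar_rev :: "'a set \<Rightarrow> ('a \<Rightarrow> 'x \<Rightarrow> 'a \<Rightarrow> real) \<Rightarrow> 'a \<Rightarrow> 'x list \<Rightarrow> 'a \<Rightarrow> real" where
  "fstar_rev A f a [] b = (if a = b then 1 else 0)"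
| "fstar_rev A f a (x # rv) b = Max ((\<lambda>c. min (fstar_rev A f a rv c) (f c x b)) ` A)"

definition fstar :: "'a set \<Rightarrow> ('a \<Rightarrow> 'x \<Rightarrow> 'a \<Rightarrow> real) \<Rightarrow> 'a \<Rightarrow> 'x list \<Rightarrow> 'a \<Rightarrow> real" where
  "fstar A f a w b = fstar_rev A f a (rev w) b"

lemma fstar_Nil: "fstar A f a [] b = (if a = b then 1 else 0)"
  by (simp add: fstar_def)

lemma fstar_snoc:
  "fstar A f a (v @ [x]) b = Max ((\<lambda>c. min (fstar A f a v c) (f c x b)) ` A)"
  by (simp add: fstar_def)

definition reach :: "'a set \<Rightarrow> ('a \<Rightarrow> 'x \<Rightarrow> 'a \<Rightarrow> real) \<Rightarrow> 'a \<Rightarrow> 'x list \<Rightarrow> 'a set" where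
  "reach A f a w = {b \<in> A. fstar A f a w b > 0}"

definition complete_fa :: "'a set \<Rightarrow> 'x set \<Rightarrow> ('a \<Rightarrow> 'x \<Rightarrow> 'a \<Rightarrow> real) \<Rightarrow> bool" where
  "complete_fa A X f \<longleftrightarrow> (\<forall>a\<in>A. \<forall>x\<in>X. reach A f a [x] \<noteq> {})"

definition D2_directable :: "'a set \<Rightarrow> 'x set \<Rightarrow> ('a \<Rightarrow> 'x \<Rightarrow> 'a \<Rightarrow> real) \<Rightarrow> bool" where
  "D2_directable A X f \<longleftrightarrow>
     (\<exists>w. set w \<subseteq> X \<and> (\<forall>a\<in>A. \<forall>b\<in>A. reach A f a w = reach A f b w))"

definition prod_fa :: "('a \<Rightarrow> 'x \<Rightarrow> 'a \<Rightarrow> real) \<Rightarrow> ('b \<Rightarrow> 'x \<Rightarrow> 'b \<Rightarrow> real) \<Rightarrow>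
    ('a \<times> 'b \<Rightarrow> 'x \<Rightarrow> 'a \<times> 'b \<Rightarrow> real)" where
  "prod_fa f g = (\<lambda>(a, b) x (a', b'). min (f a x a') (g b x b'))"

end

theory Submission
  imports Defs
begin

lemma pos_snoc:
  assumes "finite A" "A \<noteq> {}"
  shows "fstar A f a (w @ [x]) b > 0 \<longleftrightarrow> (\<exists>c\<in>A. fstar A f a w c > 0 \<and> f c x b > 0)"
  using assms by (simp add: fstar_snoc Max_gr_iff)

lemma reach_snoc:
  assumes "finite A" "A \<noteq> {}"
  shows "reach A f a (w @ [x]) = {b\<in>A. \<exists>c\<in>reach A f a w. f c x b > 0}"
  unfolding reach_def by (auto simp: pos_snoc[OF assms])

lemma reach_sub: "reach A f a w \<subseteq> A" unfolding reach_def by auto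

lemma reach_Nil: "reach A f a [] = (if a \<in> A then {a} else {})"
  unfolding reach_def by (auto simp: fstar_Nil)

lemma reach_cong:
  assumes "finite A" "A \<noteq> {}" "reach A f a u = reach A f a' u"
  shows "reach A f a (u @ z) = reach A f a' (u @ z)"
proof (induction z rule: rev_induct)
  case Nil then show ?case using assms by simp
next
  case (snoc x xs)
  then show ?case using reach_snoc[OF assms(1,2), of f a "u@xs" x]
      reach_snoc[OF assms(1,2), of f a' "u@xs" x] by simp
qed

lemma reach_app:
  assumes "finite A" "A \<noteq> {}"
  shows "reach A f a (u @ v) = (\<Union>c\<in>reach A f a u. reach A f c v)"
proof (induction v rule: rev_induct)
  case Nil then show ?case using reach_sub[of A f a u] by (auto simp: reach_Nil)
next
  case (snoc x xs)
  have "reach A f a (u @ xs @ [x]) = {b\<in>A. \<exists>c\<in>reach A f a (u@xs). f c x b > 0}"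
    using reach_snoc[OF assms, of f a "u@xs" x] by simp
  also have "\<dots> = (\<Union>c\<in>reach A f a u. reach A f c (xs @ [x]))"
    using snoc by (auto simp: reach_snoc[OF assms])
  finally show ?case by simp
qed

lemma reach_ne:
  assumes "finite A" "A \<noteq> {}" "complete_fa A X f" "a \<in> A" "set w \<subseteq> X"
  shows "reach A f a w \<noteq> {}"
  using assms(5)
proof (induction w rule: rev_induct)
  case Nil then show ?case using assms by (simp add: reach_Nil)
next
  case (snoc x xs)
  have "set xs \<subseteq> X" "x \<in> X" using snoc.prems by auto
  then have "reach A f a xs \<noteq> {}" using snoc.IH by blast
  then obtain c where c: "c \<in> reach A f a xs" using ex_in_conv by metis
  hence cA: "c \<in> A" using reach_sub[of A f a xs] by blast
  have "reach A f c [x] \<noteq> {}" using assms(3) cA \<open>x \<in> X\<close>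
    unfolding complete_fa_def by blast
  moreover have "reach A f c [x] = {e\<in>A. f c x e > 0}"
    using reach_snoc[OF assms(1,2), of f c "[]" x] cA by (simp add: reach_Nil)
  ultimately obtain e where e: "e \<in> A" "f c x e > 0" by auto
  have "e \<in> reach A f a (xs @ [x])"
    unfolding reach_snoc[OF assms(1,2)] using e c by blast
  then show ?case by blast
qed

lemma prod_pos:
  assumes "finite A" "A \<noteq> {}" "finite B" "B \<noteq> {}"
  shows "fstar (A \<times> B) (prod_fa f g) (a,b) w (a',b') > 0 \<longleftrightarrow>
         fstar A f a w a' > 0 \<and> fstar B g b w b' > 0"
proof (induction w arbitrary: a' b' rule: rev_induct)
  case Nil then show ?case by (auto simp: fstar_Nil)
next
  case (snoc x xs)
  have fin: "finite (A \<times> B)" "A \<times> B \<noteq> {}" using assms by auto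
  show ?case
  proof
    assume "0 < fstar (A \<times> B) (prod_fa f g) (a, b) (xs @ [x]) (a', b')"
    then obtain p where p: "p \<in> A \<times> B" "fstar (A \<times> B) (prod_fa f g) (a, b) xs p > 0"
       "prod_fa f g p x (a',b') > 0" unfolding pos_snoc[OF fin] by blast
    obtain c d where cd: "p = (c,d)" by (cases p)
    show "fstar A f a (xs @ [x]) a' > 0 \<and> fstar B g b (xs @ [x]) b' > 0"
      unfolding pos_snoc[OF assms(1,2)] pos_snoc[OF assms(3,4)]
      using p snoc.IH[of c d] unfolding cd by (auto simp: prod_fa_def)
  next
    assume "fstar A f a (xs @ [x]) a' > 0 \<and> fstar B g b (xs @ [x]) b' > 0"
    then obtain c d where c: "c \<in> A" "fstar A f a xs c > 0" "f c x a' > 0"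
      and d: "d \<in> B" "fstar B g b xs d > 0" "g d x b' > 0"
      unfolding pos_snoc[OF assms(1,2)] pos_snoc[OF assms(3,4)] by blast
    have "(c,d) \<in> A \<times> B" "fstar (A \<times> B) (prod_fa f g) (a, b) xs (c,d) > 0"
      "prod_fa f g (c,d) x (a',b') > 0"
      using c d snoc.IH[of c d] by (auto simp: prod_fa_def)
    then show "0 < fstar (A \<times> B) (prod_fa f g) (a, b) (xs @ [x]) (a', b')"
      unfolding pos_snoc[OF fin] by blast
  qed
qed

lemma reach_prod:
  assumes "finite A" "A \<noteq> {}" "finite B" "B \<noteq> {}"
  shows "reach (A \<times> B) (prod_fa f g) (a,b) w = reach A f a w \<times> reach B g b w"
  unfolding reach_def by (auto simp: prod_pos[OF assms])

theorem proposition6p8: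
  fixes A :: "'a set" and B :: "'b set" and X :: "'x set"
    and f :: "'a \<Rightarrow> 'x \<Rightarrow> 'a \<Rightarrow> real" and g :: "'b \<Rightarrow> 'x \<Rightarrow> 'b \<Rightarrow> real"
  assumes "fuzzy_automaton A X f" and "fuzzy_automaton B X g"
    and "complete_fa A X f" and "complete_fa B X g"
    and "D2_directable A X f" and "D2_directable B X g"
  shows "D2_directable (A \<times> B) X (prod_fa f g)"
proof -
  have fA: "finite A" "A \<noteq> {}" and fB: "finite B" "B \<noteq> {}"
    using assms(1,2) unfolding fuzzy_automaton_def by auto
  obtain u where u: "set u \<subseteq> X" "\<forall>a\<in>A. \<forall>a'\<in>A. reach A f a u = reach A f a' u"
    using assms(5) unfolding D2_directable_def by auto
  obtain v where v: "set v \<subseteq> X" "\<forall>b\<in>B. \<forall>b'\<in>B. reach B g b v = reach B g b' v"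
    using assms(6) unfolding D2_directable_def by auto
  obtain b0 where b0: "b0 \<in> B" using fB by auto
  have G: "reach B g b (u @ v) = reach B g b0 v" if "b \<in> B" for b
  proof -
    have ne: "reach B g b u \<noteq> {}" using reach_ne[OF fB assms(4) that u(1)] .
    have "\<forall>c\<in>reach B g b u. reach B g c v = reach B g b0 v"
      using v(2) b0 reach_sub[of B g b u] by blast
    then show ?thesis using reach_app[OF fB, of g b u v] ne by auto
  qed
  show ?thesis unfolding D2_directable_def
  proof (intro exI[of _ "u @ v"] conjI ballI)
    show "set (u @ v) \<subseteq> X" using u v by auto
  next
    fix p q assume p: "p \<in> A \<times> B" and q: "q \<in> A \<times> B"
    obtain a b where ab: "p = (a,b)" by (cases p)
    obtain a' b' where ab': "q = (a',b')" by (cases q)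
    have "reach A f a (u@v) = reach A f a' (u@v)"
    proof -
      have "a \<in> A" "a' \<in> A" using p q ab ab' by auto
      then show ?thesis using reach_cong[OF fA] u(2) by blast
    qed
    moreover have "reach B g b (u@v) = reach B g b' (u@v)"
      using G p q ab ab' by auto
    ultimately show "reach (A \<times> B) (prod_fa f g) p (u @ v) = reach (A \<times> B) (prod_fa f g) q (u @ v)"
      unfolding ab ab' reach_prod[OF fA fB] by simp
  qed
qed

end
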